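(* Let $M$ be $\mathbb R^n$ or a compact rank-one symmetric space, and for $r>0$ let $h_r$ be the solution of $h_r''(h_r')^{n-1}=e^{h_r}\mathcal D_M(u)$ on $[0,r)$ with $\lim_{u\to r}h_r(u)=\infty$. Put $a_r=h_r(0)=\inf_{[0,r)}h_r$. Then $r\mapsto a_r$ is decreasing and $\lim_{r\to\infty}a_r=-\infty$.
   Context: $n\ge2$ is the real dimension of $M$; $u=\sqrt\rho$, $\rho(x,v)=4|v|^2$ on $TM$ with the adapted complex structure (defined on all of $TM$ in these cases). $\mathcal D_M(u)=u^{n-1}$ for $\mathbb R^n$; $(\sinh u)^{n-1}$ for the round sphere and real projective space; $2^{n-1}(\cosh\frac u2)^k(\sinh\frac u2)^{n-1}$, $k=1,3,7$, for complex projective space, quaternionic projective space, Cayley plane. Solutions are real-analytic in $u^2$ (so $h_r'(0)=0$). *)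

theory Defs
  imports "HOL-Analysis.Analysis"
begin

datatype model_space = Euclidean | RoundSphere | RealProj | ComplexProj | QuatProj | CayleyPlane

text \<open>Admissible real dimensions n of M.\<close>
definition valid_dim :: "model_space \<Rightarrow> nat \<Rightarrow> bool" where
  "valid_dim M n \<longleftrightarrow> 2 \<le> n \<and>
     (case M of
        ComplexProj \<Rightarrow> even n
      | QuatProj \<Rightarrow> 4 dvd n
      | CayleyPlane \<Rightarrow> n = 16
      | _ \<Rightarrow> True)"

definition DM :: "model_space \<Rightarrow> nat \<Rightarrow> real \<Rightarrow> real" where
  "DM M n u = (case M of
      Euclidean \<Rightarrow> u ^ (n - 1)
    | RoundSphere \<Rightarrow> sinh u ^ (n - 1)
    | RealProj \<Rightarrow> sinh u ^ (n - 1)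
    | ComplexProj \<Rightarrow> 2 ^ (n - 1) * cosh (u / 2) ^ 1 * sinh (u / 2) ^ (n - 1)
    | QuatProj \<Rightarrow> 2 ^ (n - 1) * cosh (u / 2) ^ 3 * sinh (u / 2) ^ (n - 1)
    | CayleyPlane \<Rightarrow> 2 ^ (n - 1) * cosh (u / 2) ^ 7 * sinh (u / 2) ^ (n - 1))"

text \<open>f is a (C^2) solution on [0,r) of f'' (f')^(n-1) = e^f D_M(u), with f'(0) = 0
  (real-analyticity in u^2) and f(u) \<rightarrow> +\<infinity> as u \<rightarrow> r.\<close>
definition is_blowup_solution :: "model_space \<Rightarrow> nat \<Rightarrow> real \<Rightarrow> (real \<Rightarrow> real) \<Rightarrow> bool" where
  "is_blowup_solution M n r f \<longleftrightarrow>
     (\<exists>f' f''.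
        (\<forall>u\<in>{0..<r}. (f has_real_derivative f' u) (at u within {0..<r})
                     \<and> (f' has_real_derivative f'' u) (at u within {0..<r})
                     \<and> f'' u * (f' u) ^ (n - 1) = exp (f u) * DM M n u)
        \<and> continuous_on {0..<r} f''
        \<and> f' 0 = 0)
     \<and> filterlim f at_top (at_left r)"

end

theory Submission
  imports Defs
begin

lemma mono_within:
  fixes g :: "real \<Rightarrow> real"
  assumes "a \<le> b"
    and "\<And>x. x \<in> {a..b} \<Longrightarrow> (g has_real_derivative g' x) (at x within {a..b})"
    and "\<And>x. x \<in> {a..b} \<Longrightarrow> g' x \<ge> 0"
  shows "g a \<le> g b"
proof -
  obtain x where x: "x \<in> {a..b}" "g b - g a = (\<lambda>h. g' x * h) (b - a)"
    using mvt_very_simple[OF assms(1), of g "\<lambda>x h. g' x * h"] assms(2)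
    by (auto simp: has_field_derivative_def mult_commute_abs)
  have "0 \<le> g' x * (b - a)" using assms(1) assms(3)[OF x(1)] by simp
  with x show ?thesis by simp
qed

lemma sinh_ge_self: "0 \<le> (u::real) \<Longrightarrow> u \<le> sinh u"
proof -
  assume u: "0 \<le> u"
  have "(\<lambda>x. sinh x - x) 0 \<le> (\<lambda>x. sinh x - x) u"
    apply (rule mono_within[OF u, where g'="\<lambda>x. cosh x - 1"])
     apply (auto intro!: derivative_eq_intros simp: cosh_real_ge_1)
    done
  then show ?thesis by simp
qed

lemma DM_ge: "0 \<le> u \<Longrightarrow> u ^ (n - 1) \<le> DM M n u"
proof -
  assume u: "0 \<le> u"
  have s: "u ^ (n-1) \<le> sinh u ^ (n-1)" using sinh_ge_self[OF u] u by (simp add: power_mono)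
  have s2: "u ^ (n-1) \<le> 2 ^ (n - 1) * sinh (u/2) ^ (n-1)"
  proof -
    have "u \<le> 2 * sinh (u/2)" using sinh_ge_self[of "u/2"] u by simp
    then have "u ^ (n-1) \<le> (2 * sinh (u/2)) ^ (n-1)" using u by (intro power_mono) auto
    then show ?thesis by (simp only: power_mult_distrib)
  qed
  have nn: "0 \<le> 2 ^ (n - 1) * sinh (u/2) ^ (n-1)" using u by simp
  have c: "\<And>k. 1 \<le> cosh (u/2) ^ k" using cosh_real_ge_1 by (simp add: one_le_power)
  have "\<And>k. u ^ (n-1) \<le> 2 ^ (n - 1) * cosh (u / 2) ^ k * sinh (u / 2) ^ (n - 1)"
  proof -
    fix k :: nat
    have "1 * (2 ^ (n - 1) * sinh (u/2) ^ (n-1)) \<le> cosh (u/2) ^ k * (2 ^ (n - 1) * sinh (u/2) ^ (n-1))"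
      by (rule mult_right_mono[OF c[of k] nn])
    also have "\<dots> = 2 ^ (n - 1) * cosh (u / 2) ^ k * sinh (u / 2) ^ (n - 1)" by (simp only: mult_ac)
    finally show "u ^ (n-1) \<le> 2 ^ (n - 1) * cosh (u / 2) ^ k * sinh (u / 2) ^ (n - 1)"
      using s2 by linarith
  qed
  from this[of 1] this[of 3] this[of 7] s show ?thesis
    by (cases M) (auto simp: DM_def)
qed

lemma DM_mono: "0 \<le> u \<Longrightarrow> u \<le> v \<Longrightarrow> DM M n u \<le> DM M n v"
proof -
  assume u: "0 \<le> u" and uv: "u \<le> v"
  have s: "sinh u ^ (n-1) \<le> sinh v ^ (n-1)" using uv u by (intro power_mono) auto
  have s2: "sinh (u/2) ^ (n-1) \<le> sinh (v/2) ^ (n-1)" using uv u by (intro power_mono) auto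
  have c: "\<And>k. cosh (u/2) ^ k \<le> cosh (v/2) ^ k" using uv u
    by (intro power_mono) (auto simp: cosh_real_nonneg_le_iff)
  have "\<And>k. 2 ^ (n - 1) * cosh (u / 2) ^ k * sinh (u / 2) ^ (n - 1) \<le> 2 ^ (n - 1) * cosh (v / 2) ^ k * sinh (v / 2) ^ (n - 1)"
    using c s2 u uv by (intro mult_mono) (auto intro: mult_left_mono)
  from this[of 1] this[of 3] this[of 7] s u uv show ?thesis
    by (cases M) (auto simp: DM_def power_mono)
qed

lemma comparison:
  fixes p q p' q' P' Q' :: "real \<Rightarrow> real" and T :: real and n :: nat
  assumes T: "0 < T" and n: "1 \<le> n"
  and dp: "\<And>u. u\<in>{0..<T} \<Longrightarrow> (p has_real_derivative p' u) (at u within {0..<T})"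
  and dq: "\<And>u. u\<in>{0..<T} \<Longrightarrow> (q has_real_derivative q' u) (at u within {0..<T})"
  and dP: "\<And>u. u\<in>{0..<T} \<Longrightarrow> ((\<lambda>x. p' x ^ n) has_real_derivative P' u) (at u within {0..<T})"
  and dQ: "\<And>u. u\<in>{0..<T} \<Longrightarrow> ((\<lambda>x. q' x ^ n) has_real_derivative Q' u) (at u within {0..<T})"
  and init: "p 0 < q 0" "p' 0 ^ n \<le> q' 0 ^ n"
  and qpos: "\<And>u. u\<in>{0..<T} \<Longrightarrow> 0 \<le> q' u"
  and key: "\<And>u. u\<in>{0..<T} \<Longrightarrow> p u \<le> q u \<Longrightarrow> P' u \<le> Q' u"
  shows "\<forall>u\<in>{0..<T}. p u < q u"
proof (rule ccontr)
  assume "\<not> ?thesis"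
  then obtain u0 where u0: "u0 \<in> {0..<T}" "q u0 \<le> p u0" by force
  define S where "S = {u\<in>{0..<T}. q u \<le> p u}"
  define t where "t = Inf S"
  have u0S: "u0 \<in> S" using u0 by (simp add: S_def)
  have bdd: "bdd_below S" by (auto simp: S_def bdd_below_def)
  have t0: "0 \<le> t" unfolding t_def using u0S by (intro cInf_greatest) (auto simp: S_def)
  have tu0: "t \<le> u0" unfolding t_def using u0S bdd by (rule cInf_lower)
  have tT: "t \<in> {0..<T}" using t0 tu0 u0 by auto
  have A: "p u < q u" if "u \<in> {0..<t}" for u
  proof (rule ccontr)
    assume "\<not> p u < q u"
    then have "u \<in> S" using that tT by (auto simp: S_def)
    then have "t \<le> u" unfolding t_def using bdd by (rule cInf_lower)
    then show False using that by auto
  qed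
  have cq: "continuous_on {0..<T} q" using dq by (rule DERIV_continuous_on)
  have cp: "continuous_on {0..<T} p" using dp by (rule DERIV_continuous_on)
  have cont: "((\<lambda>x. q x - p x) \<longlongrightarrow> q t - p t) (at t within {0..<T})"
    using continuous_on_diff[OF cq cp] tT
    by (simp add: continuous_on_eq_continuous_within continuous_within)
  have B: "p u \<le> q u" if "u \<in> {0..t}" for u
  proof (cases "u < t")
    case True then show ?thesis using A that by force
  next
    case False
    then have ut: "u = t" using that by auto
    show ?thesis
    proof (cases "t = 0")
      case True then show ?thesis using init ut by simp
    next
      case False
      show ?thesis
      proof (rule ccontr)
        assume "\<not> p u \<le> q u"
        then have "q t - p t < 0" using ut by simp
        from order_tendstoD(2)[OF cont this]
        obtain d where d: "d > 0" "\<And>x. x\<in>{0..<T} \<Longrightarrow> x \<noteq> t \<Longrightarrow> dist x t < d \<Longrightarrow> q x - p x < 0"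
          by (auto simp: eventually_at)
        define x where "x = t - min d t / 2"
        have x: "x \<in> {0..<t}" using d(1) False t0 by (auto simp: x_def)
        have "q x - p x < 0" using x tT d by (intro d(2)) (auto simp: x_def dist_real_def)
        with A[OF x] show False by simp
      qed
    qed
  qed
  have sub: "{0..x} \<subseteq> {0..<T}" if "x \<in> {0..t}" for x using that tT by auto
  have C: "p' x \<le> q' x" if x: "x \<in> {0..t}" for x
  proof -
    have "(\<lambda>y. q' y ^ n - p' y ^ n) 0 \<le> (\<lambda>y. q' y ^ n - p' y ^ n) x"
    proof (rule mono_within[where g="\<lambda>y. q' y ^ n - p' y ^ n" and g'="\<lambda>y. Q' y - P' y"])
      show "0 \<le> x" using x by simp
      fix y assume y: "y \<in> {0..x}"
      then have y': "y \<in> {0..<T}" using sub[OF x] by auto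
      show "((\<lambda>y. q' y ^ n - p' y ^ n) has_real_derivative Q' y - P' y) (at y within {0..x})"
        by (intro DERIV_diff has_field_derivative_subset[OF _ sub[OF x]] dQ dP y')
      have "y \<in> {0..t}" using x y by auto
      then show "0 \<le> Q' y - P' y" using key[OF y' B] by simp
    qed
    then have le: "p' x ^ n \<le> q' x ^ n" using init by simp
    have xq: "0 \<le> q' x" using qpos sub[OF x] x by auto
    show ?thesis
    proof (rule ccontr)
      assume "\<not> p' x \<le> q' x"
      then have "q' x ^ n < p' x ^ n" using xq n by (intro power_strict_mono) auto
      with le show False by simp
    qed
  qed
  have subt: "{0..t} \<subseteq> {0..<T}" using tT by auto
  have D: "q 0 - p 0 \<le> q t - p t"
  proof (rule mono_within[where g="\<lambda>y. q y - p y" and g'="\<lambda>y. q' y - p' y", OF t0])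
    fix y assume y: "y \<in> {0..t}"
    then have y': "y \<in> {0..<T}" using tT by auto
    show "((\<lambda>y. q y - p y) has_real_derivative q' y - p' y) (at y within {0..t})"
      using subt by (intro DERIV_diff has_field_derivative_subset[OF _ subt] dq dp y')
    show "0 \<le> q' y - p' y" using C[OF y] by simp
  qed
  then have pos: "0 < q t - p t" using init by simp
  from order_tendstoD(1)[OF cont pos]
  obtain d where d: "d > 0" "\<And>x. x\<in>{0..<T} \<Longrightarrow> x \<noteq> t \<Longrightarrow> dist x t < d \<Longrightarrow> 0 < q x - p x"
    by (auto simp: eventually_at)
  have "\<exists>s\<in>S. s < t + d" unfolding t_def using u0S bdd d(1)
    by (subst cInf_less_iff[symmetric]) auto
  then obtain s where s: "s \<in> S" "s < t + d" by blast
  have ts: "t \<le> s" unfolding t_def using s(1) bdd by (rule cInf_lower)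
  have sT: "s \<in> {0..<T}" "q s \<le> p s" using s(1) by (auto simp: S_def)
  show False
  proof (cases "s = t")
    case True then show False using pos sT by simp
  next
    case False
    then have "0 < q s - p s" using d(2)[OF sT(1) False] ts s(2) by (auto simp: dist_real_def)
    then show False using sT by simp
  qed
qed

lemma DM_pos: "0 < u \<Longrightarrow> 0 < DM M n u"
  using DM_ge[of u n M] by (smt (verit) zero_less_power)

lemma sol_props:
  assumes n: "2 \<le> n" and sol: "is_blowup_solution M n r f" and r: "0 < r"
  obtains f' where "\<And>u. u\<in>{0..<r} \<Longrightarrow> (f has_real_derivative f' u) (at u within {0..<r})"
    "\<And>u. u\<in>{0..<r} \<Longrightarrow> ((\<lambda>x. f' x ^ n) has_real_derivative (real n * (exp (f u) * DM M n u))) (at u within {0..<r})"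
    "f' 0 = 0" "\<And>u. u\<in>{0..<r} \<Longrightarrow> 0 \<le> f' u" "filterlim f at_top (at_left r)"
proof -
  from sol obtain f' f'' where
    d: "\<And>u. u\<in>{0..<r} \<Longrightarrow> (f has_real_derivative f' u) (at u within {0..<r})
             \<and> (f' has_real_derivative f'' u) (at u within {0..<r})
             \<and> f'' u * (f' u) ^ (n - 1) = exp (f u) * DM M n u"
    and f0: "f' 0 = 0" and lim: "filterlim f at_top (at_left r)"
    unfolding is_blowup_solution_def by blast
  have d1: "(f has_real_derivative f' u) (at u within {0..<r})" if "u\<in>{0..<r}" for u using d[OF that] by blast
  have d2: "(f' has_real_derivative f'' u) (at u within {0..<r})" if "u\<in>{0..<r}" for u using d[OF that] by blast
  have eq: "f'' u * (f' u) ^ (n - 1) = exp (f u) * DM M n u" if "u\<in>{0..<r}" for u using d[OF that] by blast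
  have dP: "((\<lambda>x. f' x ^ n) has_real_derivative (real n * (exp (f u) * DM M n u))) (at u within {0..<r})"
    if u: "u\<in>{0..<r}" for u
  proof -
    have "((\<lambda>x. f' x ^ n) has_real_derivative (of_nat n * (f'' u * f' u ^ (n - Suc 0)))) (at u within {0..<r})"
      by (rule DERIV_power[OF d2[OF u]])
    moreover have "of_nat n * (f'' u * f' u ^ (n - Suc 0)) = real n * (exp (f u) * DM M n u)"
      using eq[OF u] by (simp add: ac_simps)
    ultimately show ?thesis by simp
  qed
  have nz: "f' u \<noteq> 0" if "u \<in> {0<..<r}" for u
  proof
    assume "f' u = 0"
    then have "exp (f u) * DM M n u = 0" using eq[of u] that n by (simp add: zero_power)
    moreover have "0 < exp (f u) * DM M n u" using DM_pos[of u M n] that by simp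
    ultimately show False by simp
  qed
  have cf': "continuous_on {0..<r} f'" using d2 by (rule DERIV_continuous_on)
  have nonneg: "0 \<le> f' u" if u: "u\<in>{0..<r}" for u
  proof (rule ccontr)
    assume "\<not> 0 \<le> f' u"
    then have neg: "f' u < 0" by simp
    then have u0: "0 < u" using f0 u by (cases "u = 0") auto
    have allneg: "f' v \<le> 0" if v: "v \<in> {0..<r}" for v
    proof (rule ccontr)
      assume "\<not> f' v \<le> 0"
      then have pos: "0 < f' v" by simp
      then have v0: "0 < v" using f0 v by (cases "v = 0") auto
      show False
      proof (cases "u \<le> v")
        case True
        have "continuous_on {u..v} f'" using cf' by (rule continuous_on_subset) (use u v in auto)
        then obtain x where "u \<le> x" "x \<le> v" "f' x = 0" using IVT'[of f' u 0 v] neg pos True by auto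
        then show False using nz[of x] u0 v by auto
      next
        case False
        have "continuous_on {v..u} f'" using cf' by (rule continuous_on_subset) (use u v in auto)
        then obtain x where "v \<le> x" "x \<le> u" "f' x = 0" using IVT2'[of f' u 0 v] neg pos False by auto
        then show False using nz[of x] v0 u by auto
      qed
    qed
    have fle: "f x \<le> f 0" if x: "x \<in> {0..<r}" for x
    proof -
      have "(\<lambda>y. - f y) 0 \<le> (\<lambda>y. - f y) x"
      proof (rule mono_within[where g="\<lambda>y. - f y" and g'="\<lambda>y. - f' y"])
        show "0 \<le> x" using x by simp
        fix y assume y: "y \<in> {0..x}"
        then have y': "y \<in> {0..<r}" using x by auto
        show "((\<lambda>y. - f y) has_real_derivative - f' y) (at y within {0..x})"
          using x by (intro DERIV_minus has_field_derivative_subset[OF d1[OF y']]) auto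
        show "0 \<le> - f' y" using allneg[OF y'] by simp
      qed
      then show ?thesis by simp
    qed
    have "eventually (\<lambda>x. f 0 < f x) (at_left r)" using lim by (simp add: filterlim_at_top_dense)
    moreover have "eventually (\<lambda>x. x \<in> {0<..<r}) (at_left r)" using r by (rule eventually_at_left_real)
    ultimately have "eventually (\<lambda>x. False) (at_left r)"
      proof eventually_elim
      case (elim x) then have "x \<in> {0..<r}" by auto
      from fle[OF this] elim show False by simp
    qed
    then show False by (simp add: trivial_limit_at_left_real)
  qed
  show ?thesis using that d1 dP f0 nonneg lim by blast
qed

lemma bounded_sub:
  fixes f :: "real \<Rightarrow> real"
  assumes "continuous_on {0..<r} f" "0 \<le> b" "b < r"
  shows "\<exists>B. \<forall>x\<in>{0..b}. f x \<le> B"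
proof -
  have "continuous_on {0..b} f" using assms(1) by (rule continuous_on_subset) (use assms in auto)
  from continuous_attains_sup[OF compact_Icc _ this] assms(2) show ?thesis by auto
qed

lemma no_bound:
  fixes f :: "real \<Rightarrow> real"
  assumes "filterlim f at_top (at_left r)" "0 < r" "\<And>u. u \<in> {0..<r} \<Longrightarrow> f u < B"
  shows False
proof -
  have "eventually (\<lambda>x. B < f x) (at_left r)" using assms(1) by (simp add: filterlim_at_top_dense)
  moreover have "eventually (\<lambda>x. x \<in> {0<..<r}) (at_left r)" using assms(2) by (rule eventually_at_left_real)
  ultimately have "eventually (\<lambda>x. False) (at_left r)"
  proof eventually_elim
    case (elim x) then have "x \<in> {0..<r}" by auto
    from assms(3)[OF this] elim show False by simp
  qed
  then show False by (simp add: trivial_limit_at_left_real)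
qed

lemma mono_part:
  assumes n: "2 \<le> n" and s1: "is_blowup_solution M n r1 f1" and s2: "is_blowup_solution M n r2 f2"
    and r1: "0 < r1" and r12: "r1 < r2"
  shows "f2 0 < f1 0"
proof (rule ccontr)
  assume "\<not> f2 0 < f1 0"
  then have le: "f1 0 \<le> f2 0" by simp
  have r2: "0 < r2" using r1 r12 by simp
  obtain p' where dp: "\<And>u. u\<in>{0..<r1} \<Longrightarrow> (f1 has_real_derivative p' u) (at u within {0..<r1})"
    and dP: "\<And>u. u\<in>{0..<r1} \<Longrightarrow> ((\<lambda>x. p' x ^ n) has_real_derivative (real n * (exp (f1 u) * DM M n u))) (at u within {0..<r1})"
    and p0: "p' 0 = 0" and lim: "filterlim f1 at_top (at_left r1)"
    using sol_props[OF n s1 r1] by metis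
  obtain g' where dg: "\<And>u. u\<in>{0..<r2} \<Longrightarrow> (f2 has_real_derivative g' u) (at u within {0..<r2})"
    and dG: "\<And>u. u\<in>{0..<r2} \<Longrightarrow> ((\<lambda>x. g' x ^ n) has_real_derivative (real n * (exp (f2 u) * DM M n u))) (at u within {0..<r2})"
    and g0: "g' 0 = 0" and gpos: "\<And>u. u\<in>{0..<r2} \<Longrightarrow> 0 \<le> g' u"
    using sol_props[OF n s2 r2] by metis
  define lam where "lam = (r1 + r2) / (2 * r1)"
  have lam1: "1 < lam" using r1 r12 by (simp add: lam_def field_simps)
  have lamr: "lam * r1 < r2" using r1 r12 by (simp add: lam_def field_simps)
  define c where "c = ln (lam ^ (n + 1))"
  have lampow: "1 < lam ^ (n + 1)" using lam1 by (intro one_less_power) auto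
  have c0: "0 < c" using lampow by (simp add: c_def)
  have expc: "exp c = lam ^ (n + 1)" using lampow by (simp add: c_def)
  have inr2: "lam * u \<in> {0..<r2}" if "u \<in> {0..<r1}" for u
  proof -
    have "lam * u < lam * r1" using that lam1 by (intro mult_strict_left_mono) auto
    then have "lam * u < r2" using lamr by linarith
    then show ?thesis using that lam1 by auto
  qed
  have img: "(\<lambda>x. lam * x) ` {0..<r1} \<subseteq> {0..<r2}" using inr2 by auto
  have dlin: "((\<lambda>x. lam * x) has_real_derivative lam) (at u within {0..<r1})" for u
    by (auto intro!: derivative_eq_intros)
  have dq: "((\<lambda>x. f2 (lam * x) + c) has_real_derivative lam * g' (lam * u)) (at u within {0..<r1})"
    if u: "u \<in> {0..<r1}" for u
  proof -
    have "(f2 has_real_derivative g' (lam * u)) (at (lam * u) within (\<lambda>x. lam * x) ` {0..<r1})"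
      by (rule has_field_derivative_subset[OF dg[OF inr2[OF u]] img])
    from DERIV_image_chain[OF this dlin]
    have "((\<lambda>x. f2 (lam * x)) has_real_derivative g' (lam * u) * lam) (at u within {0..<r1})"
      by (simp add: o_def)
    then show ?thesis by (auto intro!: derivative_eq_intros simp: ac_simps)
  qed
  have dQ: "((\<lambda>x. (lam * g' (lam * x)) ^ n) has_real_derivative
      lam ^ n * (real n * (exp (f2 (lam * u)) * DM M n (lam * u)) * lam)) (at u within {0..<r1})"
    if u: "u \<in> {0..<r1}" for u
  proof -
    have "((\<lambda>x. g' x ^ n) has_real_derivative (real n * (exp (f2 (lam * u)) * DM M n (lam * u))))
        (at (lam * u) within (\<lambda>x. lam * x) ` {0..<r1})"
      by (rule has_field_derivative_subset[OF dG[OF inr2[OF u]] img])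
    from DERIV_image_chain[OF this dlin]
    have "((\<lambda>x. g' (lam * x) ^ n) has_real_derivative (real n * (exp (f2 (lam * u)) * DM M n (lam * u))) * lam) (at u within {0..<r1})"
      by (simp add: o_def)
    from DERIV_cmult[OF this, of "lam ^ n"] show ?thesis by (simp add: power_mult_distrib)
  qed
  have cmp: "\<forall>u\<in>{0..<r1}. f1 u < f2 (lam * u) + c"
  proof (rule comparison[where p=f1 and q="\<lambda>x. f2 (lam * x) + c" and p'=p' and q'="\<lambda>x. lam * g' (lam * x)"
        and P'="\<lambda>u. real n * (exp (f1 u) * DM M n u)"
        and Q'="\<lambda>u. lam ^ n * (real n * (exp (f2 (lam * u)) * DM M n (lam * u)) * lam)" and n=n])
    show "0 < r1" by fact
    show "1 \<le> n" using n by simp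
    show "f1 0 < f2 (lam * 0) + c" using le c0 by simp
    show "p' 0 ^ n \<le> (lam * g' (lam * 0)) ^ n" using p0 g0 n by simp
  next
    fix u assume u: "u \<in> {0..<r1}"
    show "(f1 has_real_derivative p' u) (at u within {0..<r1})" by (rule dp[OF u])
    show "((\<lambda>x. p' x ^ n) has_real_derivative real n * (exp (f1 u) * DM M n u)) (at u within {0..<r1})" by (rule dP[OF u])
    show "((\<lambda>x. f2 (lam * x) + c) has_real_derivative lam * g' (lam * u)) (at u within {0..<r1})" by (rule dq[OF u])
    show "((\<lambda>x. (lam * g' (lam * x)) ^ n) has_real_derivative
      lam ^ n * (real n * (exp (f2 (lam * u)) * DM M n (lam * u)) * lam)) (at u within {0..<r1})" by (rule dQ[OF u])
    show "0 \<le> lam * g' (lam * u)" using gpos[OF inr2[OF u]] lam1 by simp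
    assume pq: "f1 u \<le> f2 (lam * u) + c"
    have u0: "0 \<le> u" using u by simp
    have "exp (f1 u) \<le> exp (f2 (lam * u) + c)" using pq by simp
    also have "\<dots> = lam ^ (n + 1) * exp (f2 (lam * u))" by (simp add: exp_add expc)
    finally have e: "exp (f1 u) \<le> lam ^ (n + 1) * exp (f2 (lam * u))" .
    have D: "DM M n u \<le> DM M n (lam * u)" using u0 lam1 by (intro DM_mono) (auto simp: mult_le_cancel_right1)
    have D0: "0 \<le> DM M n u" using DM_ge[OF u0, of n M] u0 by (smt (verit) zero_le_power)
    have "exp (f1 u) * DM M n u \<le> (lam ^ (n + 1) * exp (f2 (lam * u))) * DM M n (lam * u)"
      using e D D0 lam1 by (intro mult_mono) auto
    then have "real n * (exp (f1 u) * DM M n u) \<le> real n * ((lam ^ (n + 1) * exp (f2 (lam * u))) * DM M n (lam * u))"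
      by (intro mult_left_mono) auto
    then show "real n * (exp (f1 u) * DM M n u) \<le> lam ^ n * (real n * (exp (f2 (lam * u)) * DM M n (lam * u)) * lam)"
      by (simp add: ac_simps)
  qed
  have cf2: "continuous_on {0..<r2} f2" using dg by (rule DERIV_continuous_on)
  obtain B where B: "\<forall>x\<in>{0..lam * r1}. f2 x \<le> B" using bounded_sub[OF cf2 _ lamr] lam1 r1 by auto
  show False
  proof (rule no_bound[OF lim r1, of "B + c"])
    fix u assume u: "u \<in> {0..<r1}"
    have "lam * u \<in> {0..lam * r1}" using u lam1 by auto
    then show "f1 u < B + c" using cmp u B by force
  qed
qed

lemma limit_part:
  assumes n: "2 \<le> n"
  shows "\<exists>R>0. \<forall>r f. R < r \<longrightarrow> is_blowup_solution M n r f \<longrightarrow> f 0 < Z"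
proof -
  define k where "k = real (n + 1)"
  define C0 where "C0 = ln (2 * (2 * k) ^ n)"
  define L where "L = \<bar>C0 - Z\<bar> + 1"
  define E where "E = exp L"
  define R where "R = sqrt E"
  define c where "c = C0 + L"
  define \<psi> where "\<psi> = (\<lambda>x. c - k * ln (E - x\<^sup>2))"
  define \<psi>' where "\<psi>' = (\<lambda>x. 2 * k * x / (E - x\<^sup>2))"
  define \<psi>'' where "\<psi>'' = (\<lambda>x. 2 * k * (E + x\<^sup>2) / (E - x\<^sup>2)\<^sup>2)"
  have k1: "1 \<le> k" by (simp add: k_def)
  have L1: "1 \<le> L" by (simp add: L_def)
  have E1: "1 < E" using L1 by (simp add: E_def)
  have R0: "0 < R" using E1 by (simp add: R_def)
  have expc: "exp c = 2 * (2 * k) ^ n * E"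
    using k1 by (simp add: c_def C0_def E_def exp_add)
  have inE: "x\<^sup>2 < E" if "x \<in> {0..<R}" for x
  proof -
    have "x * x < R * R" using that by (intro mult_strict_mono) auto
    then show ?thesis using E1 by (simp add: R_def power2_eq_square)
  qed
  have d\<psi>: "(\<psi> has_real_derivative \<psi>' x) (at x within {0..<R})" if x: "x \<in> {0..<R}" for x
  proof -
    have X: "0 < E - x\<^sup>2" using inE[OF x] by simp
    have "(\<psi> has_real_derivative \<psi>' x) (at x)"
      unfolding \<psi>_def \<psi>'_def using X
      by (auto intro!: derivative_eq_intros simp: field_simps power2_eq_square)
    then show ?thesis by (rule has_field_derivative_at_within)
  qed
  have d\<psi>'': "((\<lambda>x. \<psi>' x ^ n) has_real_derivative of_nat n * (\<psi>'' x * \<psi>' x ^ (n - Suc 0))) (at x within {0..<R})"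
    if x: "x \<in> {0..<R}" for x
  proof -
    have X: "0 < E - x\<^sup>2" using inE[OF x] by simp
    have "(\<psi>' has_real_derivative \<psi>'' x) (at x)"
      unfolding \<psi>''_def \<psi>'_def using X
      by (auto intro!: derivative_eq_intros simp: field_simps power2_eq_square)
    then have "(\<psi>' has_real_derivative \<psi>'' x) (at x within {0..<R})" by (rule has_field_derivative_at_within)
    then show ?thesis by (rule DERIV_power)
  qed
  have \<psi>0: "\<psi> 0 < Z"
  proof -
    have "\<psi> 0 = C0 - real n * L" by (simp add: \<psi>_def c_def E_def k_def algebra_simps)
    moreover have "L \<le> real n * L" using n L1 by (simp add: mult_le_cancel_right1)
    ultimately show ?thesis by (simp add: L_def)
  qed
  have keyineq: "\<psi>'' x * \<psi>' x ^ (n - Suc 0) \<le> exp (\<psi> x) * x ^ (n - 1)" if x: "x \<in> {0..<R}" for x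
  proof -
    define X where "X = E - x\<^sup>2"
    have X: "0 < X" using inE[OF x] by (simp add: X_def)
    have x0: "0 \<le> x" using x by simp
    have "\<psi>' x ^ (n - Suc 0) = (2 * k / X) ^ (n - 1) * x ^ (n - 1)"
      by (simp add: \<psi>'_def X_def power_mult_distrib[symmetric])
    moreover have "\<psi>'' x = (2 * k / X) * ((E + x\<^sup>2) / X)"
      by (simp add: \<psi>''_def X_def power2_eq_square)
    ultimately have eq0: "\<psi>'' x * \<psi>' x ^ (n - Suc 0) = ((2 * k / X) * (2 * k / X) ^ (n - 1)) * ((E + x\<^sup>2) / X) * x ^ (n - 1)"
      by (simp add: ac_simps)
    have h2: "(2 * k / X) * (2 * k / X) ^ (n - 1) = (2 * k / X) ^ n"
      using n by (metis Suc_diff_1 le_trans one_le_numeral not_one_le_zero power_Suc less_le_trans zero_less_one linorder_not_le le_less)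
    have h3: "(2 * k / X) ^ n * ((E + x\<^sup>2) / X) = (2 * k) ^ n * (E + x\<^sup>2) / X ^ (n + 1)"
      by (simp add: power_divide)
    have eq1: "\<psi>'' x * \<psi>' x ^ (n - Suc 0) = ((2 * k) ^ n * (E + x\<^sup>2) / X ^ (n + 1)) * x ^ (n - 1)"
      unfolding eq0 h2 h3 ..
    have "(2 * k) ^ n * (E + x\<^sup>2) / X ^ (n + 1) \<le> (2 * k) ^ n * (2 * E) / X ^ (n + 1)"
    proof -
      have "x\<^sup>2 \<le> E" using inE[OF x] by simp
      then have "(2 * k) ^ n * (E + x\<^sup>2) \<le> (2 * k) ^ n * (2 * E)" using k1 by (intro mult_left_mono) auto
      then show ?thesis using X by (intro divide_right_mono) auto
    qed
    also have "(2 * k) ^ n * (2 * E) / X ^ (n + 1) = exp (\<psi> x)"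
    proof -
      have "exp (k * ln X) = exp (ln X) ^ (n + 1)" unfolding k_def by (rule exp_of_nat_mult)
      then have "exp (k * ln X) = X ^ (n + 1)" using X by simp
      then have "exp (\<psi> x) = exp c / X ^ (n + 1)"
        by (simp add: \<psi>_def X_def exp_diff)
      then show ?thesis by (simp add: expc ac_simps)
    qed
    finally have le1: "(2 * k) ^ n * (E + x\<^sup>2) / X ^ (n + 1) \<le> exp (\<psi> x)" .
    show ?thesis unfolding eq1 using x0 le1 by (intro mult_right_mono) auto
  qed
  show ?thesis
  proof (intro exI[of _ R] conjI allI impI)
    show "0 < R" by fact
    fix r f assume rR: "R < r" and sol: "is_blowup_solution M n r f"
    have r0: "0 < r" using rR R0 by simp
    obtain f' where df: "\<And>u. u\<in>{0..<r} \<Longrightarrow> (f has_real_derivative f' u) (at u within {0..<r})"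
      and dF: "\<And>u. u\<in>{0..<r} \<Longrightarrow> ((\<lambda>x. f' x ^ n) has_real_derivative (real n * (exp (f u) * DM M n u))) (at u within {0..<r})"
      and f0: "f' 0 = 0" and fpos: "\<And>u. u\<in>{0..<r} \<Longrightarrow> 0 \<le> f' u"
      using sol_props[OF n sol r0] by metis
    have sub: "{0..<R} \<subseteq> {0..<r}" using rR by auto
    show "f 0 < Z"
    proof (rule ccontr)
      assume "\<not> f 0 < Z"
      then have Zf: "Z \<le> f 0" by simp
      have cmp: "\<forall>u\<in>{0..<R}. \<psi> u < f u"
      proof (rule comparison[where p=\<psi> and q=f and p'=\<psi>' and q'=f' and n=n
            and P'="\<lambda>x. of_nat n * (\<psi>'' x * \<psi>' x ^ (n - Suc 0))"
            and Q'="\<lambda>u. real n * (exp (f u) * DM M n u)"])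
        show "0 < R" by fact
        show "1 \<le> n" using n by simp
        show "\<psi> 0 < f 0" using \<psi>0 Zf by simp
        show "\<psi>' 0 ^ n \<le> f' 0 ^ n" using f0 n by (simp add: \<psi>'_def)
      next
        fix u assume u: "u \<in> {0..<R}"
        then have u': "u \<in> {0..<r}" using sub by auto
        show "(\<psi> has_real_derivative \<psi>' u) (at u within {0..<R})" by (rule d\<psi>[OF u])
        show "((\<lambda>x. \<psi>' x ^ n) has_real_derivative of_nat n * (\<psi>'' u * \<psi>' u ^ (n - Suc 0))) (at u within {0..<R})"
          by (rule d\<psi>''[OF u])
        show "(f has_real_derivative f' u) (at u within {0..<R})"
          by (rule has_field_derivative_subset[OF df[OF u'] sub])
        show "((\<lambda>x. f' x ^ n) has_real_derivative real n * (exp (f u) * DM M n u)) (at u within {0..<R})"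
          by (rule has_field_derivative_subset[OF dF[OF u'] sub])
        show "0 \<le> f' u" by (rule fpos[OF u'])
        assume le: "\<psi> u \<le> f u"
        have u0: "0 \<le> u" using u by simp
        have "\<psi>'' u * \<psi>' u ^ (n - Suc 0) \<le> exp (\<psi> u) * u ^ (n - 1)" by (rule keyineq[OF u])
        also have "\<dots> \<le> exp (f u) * DM M n u"
          using le DM_ge[OF u0, of n M] u0 by (intro mult_mono) auto
        finally show "of_nat n * (\<psi>'' u * \<psi>' u ^ (n - Suc 0)) \<le> real n * (exp (f u) * DM M n u)"
          by (intro mult_left_mono) auto
      qed
      have cf: "continuous_on {0..<r} f" using df by (rule DERIV_continuous_on)
      obtain B where B: "\<forall>x\<in>{0..R}. f x \<le> B" using bounded_sub[OF cf _ rR] R0 by auto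
      define \<epsilon> where "\<epsilon> = exp (- (\<bar>B\<bar> + \<bar>c\<bar> + 1))"
      have e0: "0 < \<epsilon>" by (simp add: \<epsilon>_def)
      have e1: "\<epsilon> < 1" by (simp add: \<epsilon>_def)
      define u where "u = sqrt (E - \<epsilon>)"
      have uE: "u\<^sup>2 = E - \<epsilon>" using e1 E1 by (simp add: u_def)
      have uR: "u \<in> {0..<R}" using e0 e1 E1 by (auto simp: u_def R_def)
      have "\<psi> u = c + k * (\<bar>B\<bar> + \<bar>c\<bar> + 1)" by (simp add: \<psi>_def uE \<epsilon>_def algebra_simps)
      moreover have "\<bar>B\<bar> + \<bar>c\<bar> + 1 \<le> k * (\<bar>B\<bar> + \<bar>c\<bar> + 1)" using k1
        by (simp add: mult_le_cancel_right1)
      ultimately have "B < \<psi> u" by linarith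
      moreover have "\<psi> u < f u" using cmp uR by blast
      moreover have "f u \<le> B" using B uR by auto
      ultimately show False by simp
    qed
  qed
qed

lemma inf_part:
  assumes n: "2 \<le> n" and sol: "is_blowup_solution M n r f" and r: "0 < r"
  shows "f 0 = (INF u\<in>{0..<r}. f u)"
proof -
  obtain f' where df: "\<And>u. u\<in>{0..<r} \<Longrightarrow> (f has_real_derivative f' u) (at u within {0..<r})"
    and fpos: "\<And>u. u\<in>{0..<r} \<Longrightarrow> 0 \<le> f' u"
    using sol_props[OF n sol r] by metis
  have le: "f 0 \<le> f x" if x: "x \<in> {0..<r}" for x
  proof (rule mono_within[where g=f and g'=f'])
    show "0 \<le> x" using x by simp
    fix y assume y: "y \<in> {0..x}"
    then have y': "y \<in> {0..<r}" using x by auto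
    show "(f has_real_derivative f' y) (at y within {0..x})"
      using x by (intro has_field_derivative_subset[OF df[OF y']]) auto
    show "0 \<le> f' y" by (rule fpos[OF y'])
  qed
  show ?thesis
    by (rule cInf_eq_minimum[symmetric]) (use r le in auto)
qed

theorem lemma3p1:
  fixes M :: model_space and n :: nat and h :: "real \<Rightarrow> real \<Rightarrow> real"
  assumes "valid_dim M n"
    and "\<And>r. r > 0 \<Longrightarrow> is_blowup_solution M n r (h r)"
  shows "(\<forall>r>0. h r 0 = (INF u\<in>{0..<r}. h r u))
       \<and> (\<forall>r1 r2. 0 < r1 \<longrightarrow> r1 < r2 \<longrightarrow> h r2 0 < h r1 0)
       \<and> filterlim (\<lambda>r. h r 0) at_bot at_top"
proof (intro conjI allI impI)
  have n: "2 \<le> n" using assms(1) by (simp add: valid_dim_def)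
  show "h r 0 = (INF u\<in>{0..<r}. h r u)" if "0 < r" for r
    using inf_part[OF n assms(2)[OF that] that] .
  show "h r2 0 < h r1 0" if "0 < r1" "r1 < r2" for r1 r2
    using mono_part[OF n assms(2)[OF that(1)] assms(2) that] that by simp
  show "filterlim (\<lambda>r. h r 0) at_bot at_top"
    unfolding filterlim_at_bot
  proof
    fix Z :: real
    obtain R where R: "0 < R" "\<forall>r f. R < r \<longrightarrow> is_blowup_solution M n r f \<longrightarrow> f 0 < Z"
      using limit_part[OF n, of M Z] by blast
    have "eventually (\<lambda>r. R < r) at_top" by (rule eventually_gt_at_top)
    then show "eventually (\<lambda>r. h r 0 \<le> Z) at_top"
    proof eventually_elim
      case (elim r)
      then have "0 < r" using R by simp
      then show ?case using R elim assms(2) by (meson less_imp_le)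
    qed
  qed
qed

end
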